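(* Let $M$ be a complex matrix with $2^{k+n}$ columns (and $2^{k+n+m}$ rows for some $m\ge0$) such that $M^\dagger M\preceq I$, and let $\Sigma$ be a $2^k\times 2^k$ positive semidefinite matrix. For an $n$-qubit state $\rho$ define $A^\rho_M(\Sigma)=\mathrm{Tr}_{>k}\big(M(\Sigma\otimes\rho)M^\dagger\big)$. Let $\rho_{\mathrm{mm}}=I/2^n$ and, for a non-identity $n$-qubit Pauli observable $P$, $\rho_P=(I+P)/2^n$. Then $$\mathbb{E}_P\left[\big\|A^{\rho_{\mathrm{mm}}}_M(\Sigma)-A^{\rho_P}_M(\Sigma)\big\|_{\mathrm{tr}}^2\right]\ \le\ \frac{1}{2^{n-k}}\cdot\frac{1}{2^{2n}-1}\cdot\Big(\mathrm{Tr}\big(M^\dagger M(\Sigma\otimes I_{2^n})\big)\Big)^2,$$ where $\mathbb{E}_P$ is over a uniformly random one of the $4^n-1$ non-identity Pauli observables.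
   Context: $\mathrm{Tr}_{>k}$ denotes the partial trace over all qubits except the first $k$. $\|\cdot\|_{\mathrm{tr}}$ is the trace norm. An $n$-qubit Pauli observable is a tensor product $\sigma_1\otimes\cdots\otimes\sigma_n$ with each $\sigma_j\in\{I,X,Y,Z\}$ (the standard Pauli matrices); non-identity means not equal to $I^{\otimes n}$. $I_{2^n}$ is the $2^n\times2^n$ identity. *)

theory Defs
  imports "Jordan_Normal_Form.Schur_Decomposition" "Jordan_Normal_Form.Char_Poly"
begin

text \<open>Kronecker (tensor) product; the first factor acts on the most significant index.\<close>
definition kron :: "complex mat \<Rightarrow> complex mat \<Rightarrow> complex mat" where
  "kron A B = mat (dim_row A * dim_row B) (dim_col A * dim_col B)
     (\<lambda>(i,j). A $$ (i div dim_row B, j div dim_col B) * B $$ (i mod dim_row B, j mod dim_col B))"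

text \<open>Partial trace over all but the first k qubits of a 2^(k+r) x 2^(k+r) matrix.\<close>
definition ptrace_keep :: "nat \<Rightarrow> nat \<Rightarrow> complex mat \<Rightarrow> complex mat" where
  "ptrace_keep k r X = mat (2^k) (2^k)
     (\<lambda>(i,j). \<Sum>l<2^r. X $$ (i * 2^r + l, j * 2^r + l))"

definition hermitian_mat :: "complex mat \<Rightarrow> bool" where
  "hermitian_mat A \<longleftrightarrow> A \<in> carrier_mat (dim_row A) (dim_row A) \<and> mat_adjoint A = A"

definition psd_mat :: "complex mat \<Rightarrow> bool" where
  "psd_mat A \<longleftrightarrow> hermitian_mat A \<and>
     (\<forall>v \<in> carrier_vec (dim_row A). Re (\<Sum>i<dim_row A. cnj (v $ i) * (A *\<^sub>v v) $ i) \<ge> 0)"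

text \<open>Trace norm: sum of singular values, i.e. sum of square roots of the eigenvalues
  (with multiplicity) of A^dagger A.\<close>
definition trace_norm :: "complex mat \<Rightarrow> real" where
  "trace_norm A = (let es = (SOME es. char_poly (mat_adjoint A * A) = (\<Prod>e\<leftarrow>es. [:- e, 1:]))
                   in (\<Sum>e\<leftarrow>es. sqrt (Re e)))"

definition mat_trace :: "complex mat \<Rightarrow> complex" where
  "mat_trace A = (\<Sum>i<dim_row A. A $$ (i,i))"

datatype pauli = PI | PX | PY | PZ

definition pauli_mat :: "pauli \<Rightarrow> complex mat" where
  "pauli_mat p = (case p of
      PI \<Rightarrow> mat_of_rows_list 2 [[1, 0], [0, 1]]
    | PX \<Rightarrow> mat_of_rows_list 2 [[0, 1], [1, 0]]
    | PY \<Rightarrow> mat_of_rows_list 2 [[0, -\<i>], [\<i>, 0]]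
    | PZ \<Rightarrow> mat_of_rows_list 2 [[1, 0], [0, -1]])"

fun pauli_obs :: "pauli list \<Rightarrow> complex mat" where
  "pauli_obs [] = 1\<^sub>m 1"
| "pauli_obs (p # ps) = kron (pauli_mat p) (pauli_obs ps)"

definition nonid_paulis :: "nat \<Rightarrow> pauli list set" where
  "nonid_paulis n = {ps. length ps = n \<and> ps \<noteq> replicate n PI}"

definition A_map :: "nat \<Rightarrow> nat \<Rightarrow> nat \<Rightarrow> complex mat \<Rightarrow> complex mat \<Rightarrow> complex mat \<Rightarrow> complex mat" where
  "A_map k n m M \<Sigma> \<rho> = ptrace_keep k (n + m) (M * kron \<Sigma> \<rho> * mat_adjoint M)"

end

theory Submission
  imports Defs
begin

lemma adj_eq: "mat_adjoint A = mat (dim_col A) (dim_row A) (\<lambda>(i,j). cnj (A$$(j,i)))"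
  unfolding mat_adjoint_def
  by (rule eq_matI) (auto simp: mat_of_rows_def conjugate_complex_def)

lemma adj_dims1[simp]: "dim_row (mat_adjoint (A::complex mat)) = dim_col A" unfolding adj_eq by simp
lemma adj_dims2[simp]: "dim_col (mat_adjoint (A::complex mat)) = dim_row A" unfolding adj_eq by simp

lemma adj_index[simp]: "i < dim_col A \<Longrightarrow> j < dim_row A \<Longrightarrow> mat_adjoint A $$ (i,j) = cnj (A$$(j,i))"
  by (auto simp: adj_eq)

lemma mult_entry: assumes "A \<in> carrier_mat n p" "B \<in> carrier_mat p q" "i < n" "j < q"
  shows "(A*B)$$(i,j) = (\<Sum>t<p. A$$(i,t) * B$$(t,j))"
  using assms by (auto simp: scalar_prod_def lessThan_atLeast0 intro!: sum.cong)

lemma mult_vec_entry: assumes "A \<in> carrier_mat n p" "v \<in> carrier_vec p" "i < n"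
  shows "(A *\<^sub>v v) $ i = (\<Sum>j<p. A$$(i,j) * v$j)"
  using assms by (auto simp: scalar_prod_def lessThan_atLeast0 intro!: sum.cong)

lemma kron_dims[simp]: "dim_row (kron A B) = dim_row A * dim_row B" "dim_col (kron A B) = dim_col A * dim_col B"
  by (auto simp: kron_def)

lemma kron_index: "i < dim_row A * dim_row B \<Longrightarrow> j < dim_col A * dim_col B \<Longrightarrow>
   kron A B $$ (i,j) = A $$ (i div dim_row B, j div dim_col B) * B $$ (i mod dim_row B, j mod dim_col B)"
  by (auto simp: kron_def)

lemma sum_split: "(\<Sum>s<(K::nat)*N. f s) = (\<Sum>b<K. \<Sum>c<N. f (b*N+c))"
proof (induction K)
  case 0 then show ?case by simp
next
  case (Suc K)
  have "(\<Sum>s<Suc K*N. f s) = (\<Sum>s<K*N. f s) + (\<Sum>s\<in>{K*N..<K*N+N}. f s)"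
    by (simp add: add.commute lessThan_atLeast0 sum.atLeastLessThan_concat)
  also have "(\<Sum>s\<in>{K*N..<K*N+N}. f s) = (\<Sum>c<N. f (K*N+c))"
    using sum.atLeastLessThan_shift_0[of f "K*N" "K*N+N"] by (simp add: lessThan_atLeast0 comp_def)
  finally have "(\<Sum>s<Suc K*N. f s) = (\<Sum>s<K*N. f s) + (\<Sum>c<N. f (K*N+c))" .
  then show ?case using Suc by (simp only: sum.lessThan_Suc)
qed

lemma UNIV_pauli: "(UNIV :: pauli set) = {PI,PX,PY,PZ}"
proof (rule UNIV_eq_I)
  fix x :: pauli show "x \<in> {PI,PX,PY,PZ}" by (cases x) simp_all
qed

lemma pauli_mat_dim: "pauli_mat p \<in> carrier_mat 2 2"
  by (rule carrier_matI; cases p) (simp_all add: pauli_mat_def mat_of_rows_list_def)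

lemma pauli_obs_dim: "pauli_obs ps \<in> carrier_mat (2^length ps) (2^length ps)"
proof (induction ps)
  case Nil then show ?case by (simp only: pauli_obs.simps list.size power_0 one_carrier_mat)
next
  case (Cons p ps)
  have d: "dim_row (pauli_mat p) = 2" "dim_col (pauli_mat p) = 2" using pauli_mat_dim[of p] by auto
  have e: "dim_row (pauli_obs ps) = 2^length ps" "dim_col (pauli_obs ps) = 2^length ps" using Cons by auto
  show ?case by (rule carrier_matI) (simp_all add: d e)
qed

definition allP :: "nat \<Rightarrow> pauli list set" where "allP n = {ps. length ps = n}"

lemma allP_finite: "finite (allP n)"
proof -
  have "allP n = {xs. set xs \<subseteq> UNIV \<and> length xs = n}" unfolding allP_def by simp
  moreover have f: "finite (UNIV::pauli set)" unfolding UNIV_pauli by simp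
  ultimately show ?thesis using finite_lists_length_eq[OF f, of n] by simp
qed

lemma allP_card: "card (allP n) = 4^n"
proof -
  have "allP n = {xs. set xs \<subseteq> UNIV \<and> length xs = n}" unfolding allP_def by simp
  moreover have "card (UNIV::pauli set) = 4" unfolding UNIV_pauli by simp
  moreover have f: "finite (UNIV::pauli set)" unfolding UNIV_pauli by simp
  ultimately show ?thesis using card_lists_length_eq[OF f, of n] by simp
qed

lemma sum_allP_Suc: "(\<Sum>ps\<in>allP (Suc n). f ps) = (\<Sum>p\<in>UNIV. \<Sum>ps\<in>allP n. f (p#ps))"
proof -
  have e: "allP (Suc n) = (\<lambda>(p,ps). p#ps) ` (UNIV \<times> allP n)"
    unfolding allP_def by (auto simp: image_def length_Suc_conv)
  have i: "inj_on (\<lambda>(p,ps). p#ps) (UNIV \<times> allP n)" by (auto simp: inj_on_def)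
  have "(\<Sum>ps\<in>allP (Suc n). f ps) = (\<Sum>x\<in>UNIV \<times> allP n. f ((\<lambda>(p,ps). p#ps) x))"
    unfolding e by (rule sum.reindex[OF i, unfolded comp_def])
  also have "\<dots> = (\<Sum>(p,ps)\<in>UNIV \<times> allP n. f (p#ps))"
    by (rule sum.cong) auto
  also have "\<dots> = (\<Sum>p\<in>UNIV. \<Sum>ps\<in>allP n. f (p#ps))"
    by (simp add: sum.cartesian_product)
  finally show ?thesis .
qed

lemma pm_orth: assumes "c < 2" "c' < 2" "d < 2" "d' < 2"
  shows "(\<Sum>p\<in>UNIV. pauli_mat p $$ (c,c') * cnj (pauli_mat p $$ (d,d'))) = (if c = d \<and> c' = d' then 2 else 0)"
proof -
  have c: "c = 0 \<or> c = 1" "c' = 0 \<or> c' = 1" "d = 0 \<or> d = 1" "d' = 0 \<or> d' = 1" using assms by auto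
  show ?thesis unfolding UNIV_pauli using c
    by (auto simp: pauli_mat_def mat_of_rows_list_def)
qed

lemma div_mod_eq_iff: "(c::nat) = d \<longleftrightarrow> c div N = d div N \<and> c mod N = d mod N"
  by (metis div_mult_mod_eq)

lemma pauli_orth: "c < 2^n \<Longrightarrow> c' < 2^n \<Longrightarrow> d < 2^n \<Longrightarrow> d' < 2^n \<Longrightarrow>
  (\<Sum>ps\<in>allP n. pauli_obs ps $$ (c,c') * cnj (pauli_obs ps $$ (d,d'))) = (if c = d \<and> c' = d' then 2^n else 0)"
proof (induction n arbitrary: c c' d d')
  case 0
  have "allP 0 = {[]}" unfolding allP_def by auto
  then show ?case using 0 by simp
next
  case (Suc n)
  let ?N = "2^n :: nat"
  have dim: "ps \<in> allP n \<Longrightarrow> dim_row (pauli_obs ps) = ?N \<and> dim_col (pauli_obs ps) = ?N" for ps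
    using pauli_obs_dim[of ps] unfolding allP_def by auto
  have pd: "dim_row (pauli_mat p) = 2 \<and> dim_col (pauli_mat p) = 2" for p using pauli_mat_dim[of p] by auto
  have ent: "ps \<in> allP n \<Longrightarrow> x < 2 * ?N \<Longrightarrow> y < 2 * ?N \<Longrightarrow> kron (pauli_mat p) (pauli_obs ps) $$ (x,y) =
      pauli_mat p $$ (x div ?N, y div ?N) * pauli_obs ps $$ (x mod ?N, y mod ?N)" for ps p x y
    using dim[of ps] pd[of p] by (simp add: kron_index)
  have lt: "c < 2 * ?N" "c' < 2 * ?N" "d < 2 * ?N" "d' < 2 * ?N" using Suc.prems by auto
  have dv: "c div ?N < 2" "c' div ?N < 2" "d div ?N < 2" "d' div ?N < 2"
    using lt by (simp_all add: less_mult_imp_div_less)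
  have md: "c mod ?N < ?N" "c' mod ?N < ?N" "d mod ?N < ?N" "d' mod ?N < ?N" by simp_all
  have "(\<Sum>ps\<in>allP (Suc n). pauli_obs ps $$ (c,c') * cnj (pauli_obs ps $$ (d,d')))
      = (\<Sum>p\<in>UNIV. \<Sum>ps\<in>allP n. (pauli_mat p $$ (c div ?N, c' div ?N) * cnj (pauli_mat p $$ (d div ?N, d' div ?N)))
           * (pauli_obs ps $$ (c mod ?N, c' mod ?N) * cnj (pauli_obs ps $$ (d mod ?N, d' mod ?N))))"
    unfolding sum_allP_Suc using lt by (intro sum.cong refl) (simp add: ent mult_ac)
  also have "\<dots> = (\<Sum>p\<in>UNIV. pauli_mat p $$ (c div ?N, c' div ?N) * cnj (pauli_mat p $$ (d div ?N, d' div ?N)))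
      * (\<Sum>ps\<in>allP n. pauli_obs ps $$ (c mod ?N, c' mod ?N) * cnj (pauli_obs ps $$ (d mod ?N, d' mod ?N)))"
    by (simp add: sum_product)
  also have "\<dots> = (if c div ?N = d div ?N \<and> c' div ?N = d' div ?N then 2 else 0) *
        (if c mod ?N = d mod ?N \<and> c' mod ?N = d' mod ?N then of_nat ?N else 0)"
    using pm_orth[OF dv] Suc.IH[OF md] by simp
  also have "\<dots> = (if c = d \<and> c' = d' then 2^Suc n else 0)"
    using div_mod_eq_iff[of c d ?N] div_mod_eq_iff[of c' d' ?N] by auto
  finally show ?case .
qed

lemma delta2: fixes c c' N N' :: nat assumes "c < N" "c' < N'"
  shows "(\<Sum>d<N. \<Sum>d'<N'. if c = d \<and> c' = d' then X d d' else (0::complex)) = X c c'"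
proof -
  have "(\<Sum>d'<N'. if c = d \<and> c' = d' then X d d' else 0) = (if c = d then X d c' else 0)" for d
  proof (cases "c = d")
    case True
    have "(\<Sum>d'<N'. if c' = d' then X d d' else 0) = X d c'"
      using sum.delta[of "{..<N'}" c' "\<lambda>d'. X d d'"] assms by simp
    then show ?thesis using True by simp
  qed simp
  then have "(\<Sum>d<N. \<Sum>d'<N'. if c = d \<and> c' = d' then X d d' else 0) = (\<Sum>d<N. if c = d then X d c' else 0)"
    by simp
  also have "\<dots> = X c c'" using sum.delta[of "{..<N}" c "\<lambda>d. X d c'"] assms by simp
  finally show ?thesis .
qed

lemma pauli_twirl: fixes h :: "nat \<Rightarrow> nat \<Rightarrow> complex"
  shows "(\<Sum>ps\<in>allP n. (cmod (\<Sum>c<2^n. \<Sum>c'<2^n. pauli_obs ps $$ (c,c') * h c c'))^2)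
       = 2^n * (\<Sum>c<2^n. \<Sum>c'<2^n. (cmod (h c c'))^2)"
proof -
  let ?N = "2^n::nat"
  let ?z = "\<lambda>ps. (\<Sum>c<?N. \<Sum>c'<?N. pauli_obs ps $$ (c,c') * h c c')"
  have zz: "?z ps * cnj (?z ps) = (\<Sum>c<?N. \<Sum>c'<?N. \<Sum>d<?N. \<Sum>d'<?N.
      (pauli_obs ps $$ (c,c') * h c c') * cnj (pauli_obs ps $$ (d,d') * h d d'))" for ps
  proof -
    have "?z ps * cnj (?z ps) = (\<Sum>c<?N. \<Sum>c'<?N. (pauli_obs ps $$ (c,c') * h c c') * cnj (?z ps))"
      by (simp only: sum_distrib_right)
    also have "\<dots> = (\<Sum>c<?N. \<Sum>c'<?N. \<Sum>d<?N. \<Sum>d'<?N.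
      (pauli_obs ps $$ (c,c') * h c c') * cnj (pauli_obs ps $$ (d,d') * h d d'))"
      by (simp only: cnj_sum sum_distrib_left)
    finally show ?thesis .
  qed
  have "complex_of_real (\<Sum>ps\<in>allP n. (cmod (?z ps))^2) = (\<Sum>ps\<in>allP n. ?z ps * cnj (?z ps))"
    by (simp only: of_real_sum complex_norm_square)
  also have "\<dots> = (\<Sum>ps\<in>allP n. \<Sum>c<?N. \<Sum>c'<?N. \<Sum>d<?N. \<Sum>d'<?N.
      (pauli_obs ps $$ (c,c') * h c c') * cnj (pauli_obs ps $$ (d,d') * h d d'))"
    by (simp only: zz)
  also have "\<dots> = (\<Sum>c<?N. \<Sum>c'<?N. \<Sum>d<?N. \<Sum>d'<?N. \<Sum>ps\<in>allP n.
      (pauli_obs ps $$ (c,c') * h c c') * cnj (pauli_obs ps $$ (d,d') * h d d'))"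
    by (simp only: sum.swap[of _ "allP n"])
  also have "\<dots> = (\<Sum>c<?N. \<Sum>c'<?N. \<Sum>d<?N. \<Sum>d'<?N.
      (h c c' * cnj (h d d')) * (if c = d \<and> c' = d' then of_nat ?N else 0))"
  proof (intro sum.cong refl)
    fix c c' d d' assume "c \<in> {..<?N}" "c' \<in> {..<?N}" "d \<in> {..<?N}" "d' \<in> {..<?N}"
    then have o: "(\<Sum>ps\<in>allP n. pauli_obs ps $$ (c,c') * cnj (pauli_obs ps $$ (d,d'))) = (if c = d \<and> c' = d' then 2^n else 0)"
      by (intro pauli_orth) auto
    have "(\<Sum>ps\<in>allP n. (pauli_obs ps $$ (c,c') * h c c') * cnj (pauli_obs ps $$ (d,d') * h d d'))
        = (h c c' * cnj (h d d')) * (\<Sum>ps\<in>allP n. pauli_obs ps $$ (c,c') * cnj (pauli_obs ps $$ (d,d')))"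
      by (simp add: sum_distrib_left mult_ac)
    then show "(\<Sum>ps\<in>allP n. (pauli_obs ps $$ (c,c') * h c c') * cnj (pauli_obs ps $$ (d,d') * h d d'))
        = (h c c' * cnj (h d d')) * (if c = d \<and> c' = d' then of_nat ?N else 0)" using o by simp
  qed
  also have "\<dots> = (\<Sum>c<?N. \<Sum>c'<?N. of_nat ?N * (h c c' * cnj (h c c')))"
  proof (intro sum.cong refl)
    fix c c' assume "c \<in> {..<?N}" "c' \<in> {..<?N}"
    then show "(\<Sum>d<?N. \<Sum>d'<?N. (h c c' * cnj (h d d')) * (if c = d \<and> c' = d' then of_nat ?N else 0))
       = of_nat ?N * (h c c' * cnj (h c c'))"
    proof -
      have "(\<Sum>d<?N. \<Sum>d'<?N. (h c c' * cnj (h d d')) * (if c = d \<and> c' = d' then of_nat ?N else 0))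
        = (\<Sum>d<?N. \<Sum>d'<?N. if c = d \<and> c' = d' then of_nat ?N * (h d d' * cnj (h d d')) else 0)"
        by (intro sum.cong refl) auto
      also have "\<dots> = of_nat ?N * (h c c' * cnj (h c c'))"
        using \<open>c \<in> {..<?N}\<close> \<open>c' \<in> {..<?N}\<close> by (intro delta2) auto
      finally show ?thesis .
    qed
  qed
  also have "\<dots> = complex_of_real (2^n * (\<Sum>c<2^n. \<Sum>c'<2^n. (cmod (h c c'))^2))"
  proof -
    have e: "\<And>z. z * cnj z = complex_of_real ((cmod z)^2)" by (simp only: complex_norm_square)
    show ?thesis by (simp add: e sum_distrib_left)
  qed
  finally show ?thesis by (simp only: of_real_eq_iff)
qed

lemma cs_sum: fixes f :: "'a \<Rightarrow> real" assumes "finite A"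
  shows "(\<Sum>i\<in>A. f i)^2 \<le> real (card A) * (\<Sum>i\<in>A. (f i)^2)"
proof -
  have "0 \<le> (\<Sum>i\<in>A. \<Sum>j\<in>A. (f i - f j)^2)" by (intro sum_nonneg) auto
  also have "\<dots> = (\<Sum>i\<in>A. \<Sum>j\<in>A. (f i)^2 + (f j)^2 - 2 * (f i * f j))"
    by (simp add: power2_diff mult.assoc)
  also have "\<dots> = 2 * (real (card A) * (\<Sum>i\<in>A. (f i)^2)) - 2 * (\<Sum>i\<in>A. f i)^2"
  proof -
    have p: "(\<Sum>i\<in>A. \<Sum>j\<in>A. f i * f j) = (\<Sum>i\<in>A. f i)^2"
    proof -
      have "(\<Sum>i\<in>A. \<Sum>j\<in>A. f i * f j) = (\<Sum>i\<in>A. f i * sum f A)" by (simp add: sum_distrib_left)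
      also have "\<dots> = sum f A * sum f A" by (rule sum_distrib_right[symmetric])
      finally show ?thesis by (simp add: power2_eq_square)
    qed
    have q: "(\<Sum>i\<in>A. \<Sum>j\<in>A. (f j)^2) = real (card A) * (\<Sum>i\<in>A. (f i)^2)" by simp
    have r: "(\<Sum>i\<in>A. \<Sum>j\<in>A. (f i)^2) = real (card A) * (\<Sum>i\<in>A. (f i)^2)"
      by (simp add: sum_distrib_left[symmetric] mult.commute)
    have s: "(\<Sum>i\<in>A. \<Sum>j\<in>A. (f i)^2 + (f j)^2 - 2 * (f i * f j)) =
      (\<Sum>i\<in>A. \<Sum>j\<in>A. (f i)^2) + (\<Sum>i\<in>A. \<Sum>j\<in>A. (f j)^2) - (\<Sum>i\<in>A. \<Sum>j\<in>A. 2 * (f i * f j))"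
      by (simp only: sum.distrib sum_subtractf)
    have t: "(\<Sum>i\<in>A. \<Sum>j\<in>A. 2 * (f i * f j)) = 2 * (\<Sum>i\<in>A. \<Sum>j\<in>A. f i * f j)"
      by (simp add: sum_distrib_left)
    show ?thesis using s t p q r by linarith
  qed
  finally show ?thesis by simp
qed

definition tr :: "complex mat \<Rightarrow> complex" where "tr A = (\<Sum>i<dim_row A. A$$(i,i))"

lemma tr_comm: assumes "A \<in> carrier_mat K K" "B \<in> carrier_mat K K" shows "tr (A*B) = tr (B*A)"
proof -
  have "tr (A*B) = (\<Sum>i<K. \<Sum>t<K. A$$(i,t) * B$$(t,i))"
    unfolding tr_def using assms by (simp del: index_mult_mat(1) add: mult_entry[OF assms])
  also have "\<dots> = (\<Sum>t<K. \<Sum>i<K. B$$(t,i) * A$$(i,t))" by (subst sum.swap) (simp add: mult.commute)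
  also have "\<dots> = tr (B*A)"
    unfolding tr_def using assms by (simp del: index_mult_mat(1) add: mult_entry[OF assms(2,1)])
  finally show ?thesis .
qed

lemma eig_nonneg: fixes X :: "complex mat"
  assumes X: "X \<in> carrier_mat R K" and ev: "eigenvalue (mat_adjoint X * X) e"
  shows "Re e \<ge> 0"
proof -
  let ?Y = "mat_adjoint X * X"
  have Y: "?Y \<in> carrier_mat K K" using X by auto
  obtain v where v: "v \<in> carrier_vec K" "v \<noteq> 0\<^sub>v K" "?Y *\<^sub>v v = e \<cdot>\<^sub>v v"
    using ev Y unfolding eigenvalue_def eigenvector_def by auto
  have adj: "mat_adjoint X \<in> carrier_mat K R" using X by (intro carrier_matI) auto
  have Yent: "i < K \<Longrightarrow> j < K \<Longrightarrow> ?Y $$ (i,j) = (\<Sum>r<R. cnj (X$$(r,i)) * X$$(r,j))" for i j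
    using X by (simp del: index_mult_mat(1) add: mult_entry[OF adj X])
  have Yv: "i < K \<Longrightarrow> (?Y *\<^sub>v v) $ i = (\<Sum>j<K. ?Y $$ (i,j) * v $ j)" for i
    by (rule mult_vec_entry[OF Y v(1)])
  have cz: "\<And>z. cnj z * z = complex_of_real ((cmod z)^2)" by (subst complex_norm_square) (rule mult.commute)
  let ?w = "\<lambda>r. \<Sum>j<K. X$$(r,j) * v$j"
  have "(\<Sum>i<K. cnj (v$i) * (?Y *\<^sub>v v) $ i) = (\<Sum>i<K. \<Sum>j<K. \<Sum>r<R. cnj (v$i) * (cnj (X$$(r,i)) * X$$(r,j)) * v $ j)"
    by (simp add: Yv Yent sum_distrib_left sum_distrib_right mult_ac)
  also have "\<dots> = (\<Sum>r<R. \<Sum>i<K. \<Sum>j<K. cnj (X$$(r,i) * v$i) * (X$$(r,j) * v $ j))"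
    by (simp only: sum.swap[of _ "{..<R}"]) (simp add: mult_ac)
  also have "\<dots> = (\<Sum>r<R. cnj (?w r) * ?w r)"
    by (simp add: cnj_sum sum_distrib_left sum_distrib_right, rule sum.cong[OF refl], rule sum.swap)
  also have "\<dots> = complex_of_real (\<Sum>r<R. (cmod (?w r))^2)"
    by (simp only: cz of_real_sum)
  finally have lhs: "(\<Sum>i<K. cnj (v$i) * (?Y *\<^sub>v v) $ i) = complex_of_real (\<Sum>r<R. (cmod (?w r))^2)" .
  have "(\<Sum>i<K. cnj (v$i) * (?Y *\<^sub>v v) $ i) = e * (\<Sum>i<K. cnj (v$i) * v$i)"
    using v by (simp add: sum_distrib_left mult_ac)
  also have "(\<Sum>i<K. cnj (v$i) * v$i) = complex_of_real (\<Sum>i<K. (cmod (v$i))^2)"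
    by (simp only: cz of_real_sum)
  finally have eq: "e * complex_of_real (\<Sum>i<K. (cmod (v$i))^2) = complex_of_real (\<Sum>r<R. (cmod (?w r))^2)"
    using lhs by simp
  have "\<exists>i<K. v$i \<noteq> 0"
  proof (rule ccontr)
    assume "\<not> ?thesis"
    then have "v = 0\<^sub>v K" using v(1) by (intro eq_vecI) auto
    then show False using v(2) by simp
  qed
  then obtain i where i: "i < K" "v$i \<noteq> 0" by auto
  have spos: "(\<Sum>i<K. (cmod (v$i))^2) > 0"
  proof -
    have "(cmod (v$i))^2 > 0" using i by simp
    moreover have "(cmod (v$i))^2 \<le> (\<Sum>i<K. (cmod (v$i))^2)"
      using i by (intro member_le_sum) auto
    ultimately show ?thesis by linarith
  qed
  from eq have "Re e * (\<Sum>i<K. (cmod (v$i))^2) = (\<Sum>r<R. (cmod (?w r))^2)"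
  proof -
    have "Re (e * complex_of_real (\<Sum>i<K. (cmod (v$i))^2)) = Re e * (\<Sum>i<K. (cmod (v$i))^2)" by simp
    then show ?thesis using arg_cong[OF eq, of Re] by simp
  qed
  moreover have "(\<Sum>r<R. (cmod (?w r))^2) \<ge> 0" by (intro sum_nonneg) auto
  ultimately show ?thesis using spos by (metis zero_le_mult_iff linorder_not_less)
qed

lemma tn_bound: fixes X :: "complex mat" assumes X: "X \<in> carrier_mat K K"
  shows "(trace_norm X)^2 \<le> real K * (\<Sum>i<K. \<Sum>j<K. (cmod (X$$(i,j)))^2)"
proof -
  let ?Y = "mat_adjoint X * X"
  have adj: "mat_adjoint X \<in> carrier_mat K K" using X by (intro carrier_matI) auto
  have Y: "?Y \<in> carrier_mat K K" using X adj by auto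
  define es where "es = (SOME es. char_poly ?Y = (\<Prod>e\<leftarrow>es. [:- e, 1:]))"
  have ces: "char_poly ?Y = (\<Prod>e\<leftarrow>es. [:- e, 1:])"
    unfolding es_def using char_poly_factorized[OF Y] by (metis (mono_tags, lifting) someI_ex)
  have len: "length es = K"
    using degree_linear_factors[of uminus es] degree_monic_char_poly[OF Y] ces by simp
  have tn: "trace_norm X = (\<Sum>e\<leftarrow>es. sqrt (Re e))"
    unfolding trace_norm_def Let_def es_def by simp
  have nn: "Re e \<ge> 0" if e: "e \<in> set es" for e
  proof -
    have "poly (char_poly ?Y) e = 0"
      unfolding ces poly_prod_list using e by (simp add: prod_list_zero_iff o_def)
    then have "eigenvalue ?Y e" using eigenvalue_root_char_poly[OF Y] by simp
    then show ?thesis by (rule eig_nonneg[OF X])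
  qed
  obtain B P Q where sd: "schur_decomposition ?Y es = (B,P,Q)" by (cases "schur_decomposition ?Y es") auto
  from schur_decomposition[OF Y ces sd] have sw: "similar_mat_wit ?Y B P Q" and dB: "diag_mat B = es" by auto
  from sw Y have cB: "B \<in> carrier_mat K K" and cP: "P \<in> carrier_mat K K" and cQ: "Q \<in> carrier_mat K K"
    and QP: "Q * P = 1\<^sub>m K" and YPBQ: "?Y = P * B * Q"
    unfolding similar_mat_wit_def Let_def by auto
  have "tr ?Y = tr (P * (B * Q))" using YPBQ cP cB cQ by (simp add: assoc_mult_mat)
  also have "\<dots> = tr ((B * Q) * P)" by (rule tr_comm[OF cP]) (use cB cQ in auto)
  also have "\<dots> = tr (B * (Q * P))" using cP cB cQ by (simp add: assoc_mult_mat)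
  also have "\<dots> = tr B" using QP cB by simp
  finally have trYB: "tr ?Y = tr B" .
  have sl: "sum_list es = tr B"
    unfolding dB[symmetric] diag_mat_def tr_def
    by (simp add: sum_set_upt_conv_sum_list_nat[symmetric] atLeast0LessThan)
  have trY: "tr ?Y = complex_of_real (\<Sum>i<K. \<Sum>r<K. (cmod (X$$(r,i)))^2)"
  proof -
    have cz: "\<And>z. cnj z * z = complex_of_real ((cmod z)^2)" by (subst complex_norm_square) (rule mult.commute)
    have "tr ?Y = (\<Sum>i<K. \<Sum>r<K. cnj (X$$(r,i)) * X$$(r,i))"
      unfolding tr_def using Y X adj by (simp del: index_mult_mat(1) add: mult_entry[OF adj X])
    also have "\<dots> = complex_of_real (\<Sum>i<K. \<Sum>r<K. (cmod (X$$(r,i)))^2)"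
      by (simp only: cz of_real_sum)
    finally show ?thesis .
  qed
  have s1: "(\<Sum>e\<leftarrow>es. sqrt (Re e)) = (\<Sum>i<K. sqrt (Re (es!i)))"
    using len by (simp add: sum_list_sum_nth atLeast0LessThan)
  have s2: "(\<Sum>i<K. (sqrt (Re (es!i)))^2) = Re (sum_list es)"
  proof -
    have "(\<Sum>i<K. (sqrt (Re (es!i)))^2) = (\<Sum>i<K. Re (es!i))"
      using nn len by (intro sum.cong refl) (simp add: nth_mem)
    also have "\<dots> = Re (sum_list es)" using len by (simp add: sum_list_sum_nth atLeast0LessThan Re_sum)
    finally show ?thesis .
  qed
  have "(trace_norm X)^2 \<le> real (card {..<K}) * (\<Sum>i<K. (sqrt (Re (es!i)))^2)"
    unfolding tn s1 by (rule cs_sum) simp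
  also have "\<dots> = real K * (\<Sum>i<K. \<Sum>r<K. (cmod (X$$(r,i)))^2)"
    unfolding s2 sl trYB[symmetric] trY by simp
  also have "(\<Sum>i<K. \<Sum>r<K. (cmod (X$$(r,i)))^2) = (\<Sum>i<K. \<Sum>j<K. (cmod (X$$(i,j)))^2)"
    by (rule sum.swap)
  finally show ?thesis .
qed

definition Bf :: "complex mat \<Rightarrow> nat \<Rightarrow> nat \<Rightarrow> (nat \<Rightarrow> nat \<Rightarrow> complex) \<Rightarrow> (nat \<Rightarrow> nat \<Rightarrow> complex) \<Rightarrow> complex" where
  "Bf S K L u v = (\<Sum>l<L. \<Sum>b<K. \<Sum>b'<K. u l b * S$$(b,b') * cnj (v l b'))"

lemma Bpos: assumes "psd_mat S" "S \<in> carrier_mat K K" shows "Re (Bf S K L w w) \<ge> 0"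
proof -
  have "Re (\<Sum>b<K. \<Sum>b'<K. w l b * S$$(b,b') * cnj (w l b')) \<ge> 0" for l
  proof -
    define v where "v = vec K (\<lambda>b. cnj (w l b))"
    have v: "v \<in> carrier_vec (dim_row S)" using assms(2) unfolding v_def by auto
    have "Re (\<Sum>i<dim_row S. cnj (v $ i) * (S *\<^sub>v v) $ i) \<ge> 0"
      using assms(1) v unfolding psd_mat_def by blast
    moreover have "(\<Sum>i<dim_row S. cnj (v $ i) * (S *\<^sub>v v) $ i) = (\<Sum>b<K. \<Sum>b'<K. w l b * S$$(b,b') * cnj (w l b'))"
    proof -
      have "(\<Sum>i<dim_row S. cnj (v $ i) * (S *\<^sub>v v) $ i) = (\<Sum>i<K. w l i * (\<Sum>j<K. S$$(i,j) * cnj (w l j)))"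
        using assms(2) v by (intro sum.cong refl) (auto simp del: index_mult_mat_vec simp: v_def mult_vec_entry[OF assms(2)])
      also have "\<dots> = (\<Sum>b<K. \<Sum>b'<K. w l b * S$$(b,b') * cnj (w l b'))"
        by (simp add: sum_distrib_left mult_ac)
      finally show ?thesis .
    qed
    ultimately show ?thesis by metis
  qed
  then have "0 \<le> (\<Sum>l<L. Re (\<Sum>b<K. \<Sum>b'<K. w l b * S$$(b,b') * cnj (w l b')))"
    by (intro sum_nonneg) blast
  also have "\<dots> = Re (Bf S K L w w)" unfolding Bf_def by (rule Re_sum[symmetric])
  finally show ?thesis .
qed

lemma Bherm: assumes "hermitian_mat S" "S \<in> carrier_mat K K" shows "Bf S K L v u = cnj (Bf S K L u v)"
proof -
  have h: "b < K \<Longrightarrow> b' < K \<Longrightarrow> S$$(b',b) = cnj (S$$(b,b'))" for b b'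
  proof -
    assume "b < K" "b' < K"
    then have "mat_adjoint S $$ (b',b) = cnj (S$$(b,b'))" using assms(2) by simp
    then show ?thesis using assms(1) unfolding hermitian_mat_def by simp
  qed
  have "cnj (Bf S K L u v) = (\<Sum>l<L. \<Sum>b<K. \<Sum>b'<K. cnj (u l b) * S$$(b',b) * v l b')"
  proof -
    have h': "b < K \<Longrightarrow> b' < K \<Longrightarrow> cnj (S$$(b,b')) = S$$(b',b)" for b b' using h[of b' b] by simp
    show ?thesis unfolding Bf_def cnj_sum by (intro sum.cong refl) (simp add: h')
  qed
  also have "\<dots> = (\<Sum>l<L. \<Sum>b'<K. \<Sum>b<K. v l b' * S$$(b',b) * cnj (u l b))"
    by (rule sum.cong[OF refl], subst sum.swap, simp add: mult_ac)
  finally show ?thesis unfolding Bf_def by simp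
qed

lemma Bexp: "Bf S K L (\<lambda>l b. u l b - t * v l b) (\<lambda>l b. u l b - t * v l b)
   = Bf S K L u u - cnj t * Bf S K L u v - t * Bf S K L v u + t * cnj t * Bf S K L v v"
proof -
  have e: "(u l b - t * v l b) * S$$(b,b') * cnj (u l b' - t * v l b') =
     u l b * S$$(b,b') * cnj (u l b') - cnj t * (u l b * S$$(b,b') * cnj (v l b'))
     - t * (v l b * S$$(b,b') * cnj (u l b')) + t * cnj t * (v l b * S$$(b,b') * cnj (v l b'))" for l b b'
    by (simp add: algebra_simps)
  show ?thesis unfolding Bf_def
    by (simp only: e sum.distrib sum_subtractf sum_distrib_left)
qed

lemma quad: fixes a c q :: real assumes "a \<ge> 0" "c \<ge> 0" "q \<ge> 0" "\<And>r. 0 \<le> a - 2*r*q + r^2*q*c"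
  shows "q \<le> a * c"
proof (cases "q = 0")
  case True then show ?thesis using assms by simp
next
  case False
  then have qp: "q > 0" using assms by simp
  show ?thesis
  proof (cases "c = 0")
    case True
    have "0 \<le> a - 2*((a+1)/(2*q))*q" using assms(4)[of "(a+1)/(2*q)"] True by simp
    also have "2*((a+1)/(2*q))*q = a + 1" using qp by (simp add: field_simps)
    finally show ?thesis by simp
  next
    case False
    then have cp: "c > 0" using assms by simp
    have "0 \<le> a - 2*(1/c)*q + (1/c)^2*q*c" using assms(4) by blast
    also have "\<dots> = a - q / c" using cp by (simp add: field_simps power2_eq_square)
    finally have "q / c \<le> a" by simp
    then show ?thesis using cp by (simp add: field_simps mult.commute)
  qed
qed

lemma Bcs: assumes "psd_mat S" "S \<in> carrier_mat K K"
  shows "(cmod (Bf S K L u v))^2 \<le> Re (Bf S K L u u) * Re (Bf S K L v v)"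
proof -
  let ?z = "Bf S K L u v"
  define q where "q = (cmod ?z)^2"
  have herm: "hermitian_mat S" using assms(1) unfolding psd_mat_def by simp
  have zz: "cnj ?z * ?z = complex_of_real q" unfolding q_def by (subst complex_norm_square) (rule mult.commute)
  have zz': "?z * cnj ?z = complex_of_real q" unfolding q_def by (subst complex_norm_square) simp
  show ?thesis unfolding q_def[symmetric]
  proof (rule quad)
    show "Re (Bf S K L u u) \<ge> 0" "Re (Bf S K L v v) \<ge> 0" using Bpos[OF assms] by auto
    show "q \<ge> 0" unfolding q_def by simp
    fix r :: real
    let ?t = "complex_of_real r * ?z"
    have "0 \<le> Re (Bf S K L (\<lambda>l b. u l b - ?t * v l b) (\<lambda>l b. u l b - ?t * v l b))" by (rule Bpos[OF assms])
    also have "\<dots> = Re (Bf S K L u u) - Re (cnj ?t * ?z) - Re (?t * cnj ?z) + Re (?t * cnj ?t * Bf S K L v v)"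
      unfolding Bexp Bherm[OF herm assms(2), where v=v and u=u] by (simp only: minus_complex.simps plus_complex.simps)
    also have "cnj ?t * ?z = complex_of_real (r * q)"
      by (simp only: complex_cnj_mult complex_cnj_complex_of_real mult.assoc zz of_real_mult)
    also have "?t * cnj ?z = complex_of_real (r * q)"
      by (simp only: mult.assoc zz' of_real_mult)
    also have "?t * cnj ?t = complex_of_real (r^2) * (?z * cnj ?z)"
      by (simp only: complex_cnj_mult complex_cnj_complex_of_real of_real_power power2_eq_square of_real_mult mult_ac)
    also have "\<dots> = complex_of_real (r^2 * q)" by (simp only: zz' of_real_mult)
    finally show "0 \<le> Re (Bf S K L u u) - 2 * r * q + r^2 * q * Re (Bf S K L v v)" by (simp add: algebra_simps)
  qed
qed

lemma sum5: "(\<Sum>a\<in>A. \<Sum>b\<in>B. \<Sum>c\<in>C. \<Sum>d\<in>D. \<Sum>e\<in>E. f a b c d e) =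
   (\<Sum>e\<in>E. \<Sum>c\<in>C. \<Sum>a\<in>A. \<Sum>b\<in>B. \<Sum>d\<in>D. f a b c d e)"
proof -
  have s1: "\<And>a b c. (\<Sum>d\<in>D. \<Sum>e\<in>E. f a b c d e) = (\<Sum>e\<in>E. \<Sum>d\<in>D. f a b c d e)" by (rule sum.swap)
  have s2: "\<And>a b. (\<Sum>c\<in>C. \<Sum>e\<in>E. \<Sum>d\<in>D. f a b c d e) = (\<Sum>e\<in>E. \<Sum>c\<in>C. \<Sum>d\<in>D. f a b c d e)" by (rule sum.swap)
  have s3: "\<And>a. (\<Sum>b\<in>B. \<Sum>e\<in>E. \<Sum>c\<in>C. \<Sum>d\<in>D. f a b c d e) = (\<Sum>e\<in>E. \<Sum>b\<in>B. \<Sum>c\<in>C. \<Sum>d\<in>D. f a b c d e)" by (rule sum.swap)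
  have s4: "(\<Sum>a\<in>A. \<Sum>e\<in>E. \<Sum>b\<in>B. \<Sum>c\<in>C. \<Sum>d\<in>D. f a b c d e) = (\<Sum>e\<in>E. \<Sum>a\<in>A. \<Sum>b\<in>B. \<Sum>c\<in>C. \<Sum>d\<in>D. f a b c d e)" by (rule sum.swap)
  have s5: "\<And>e a. (\<Sum>b\<in>B. \<Sum>c\<in>C. \<Sum>d\<in>D. f a b c d e) = (\<Sum>c\<in>C. \<Sum>b\<in>B. \<Sum>d\<in>D. f a b c d e)" by (rule sum.swap)
  have s6: "\<And>e. (\<Sum>a\<in>A. \<Sum>c\<in>C. \<Sum>b\<in>B. \<Sum>d\<in>D. f a b c d e) = (\<Sum>c\<in>C. \<Sum>a\<in>A. \<Sum>b\<in>B. \<Sum>d\<in>D. f a b c d e)" by (rule sum.swap)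
  show ?thesis by (simp only: s1, simp only: s2, simp only: s3, simp only: s4, simp only: s5, simp only: s6)
qed

lemma A_entry:
  fixes M S \<rho> :: "complex mat" and k n m :: nat
  defines "K \<equiv> (2::nat)^k" and "N \<equiv> (2::nat)^n" and "L \<equiv> (2::nat)^(n+m)"
  assumes M: "M \<in> carrier_mat (K*L) (K*N)" and S: "S \<in> carrier_mat K K" and r: "\<rho> \<in> carrier_mat N N"
    and a: "a < K" and a': "a' < K"
  shows "A_map k n m M S \<rho> $$ (a,a') = (\<Sum>l<L. \<Sum>t<K*N. \<Sum>s<K*N.
     M$$(a*L+l,s) * (S$$(s div N, t div N) * \<rho>$$(s mod N, t mod N)) * cnj (M$$(a'*L+l,t)))"
proof -
  have Kr: "kron S \<rho> \<in> carrier_mat (K*N) (K*N)" using S r by (intro carrier_matI) auto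
  have MK: "M * kron S \<rho> \<in> carrier_mat (K*L) (K*N)" using M Kr by auto
  have adj: "mat_adjoint M \<in> carrier_mat (K*N) (K*L)" using M by (intro carrier_matI) auto
  have pl: "l < L \<Longrightarrow> x < K \<Longrightarrow> x*L+l < K*L" for x l
  proof -
    assume "l < L" "x < K"
    then have "x*L+l < x*L + L" by simp
    also have "\<dots> = (x+1)*L" by simp
    also have "\<dots> \<le> K*L" using \<open>x < K\<close> by (intro mult_right_mono) auto
    finally show ?thesis .
  qed
  have "A_map k n m M S \<rho> $$ (a,a') = (\<Sum>l<L. (M * kron S \<rho> * mat_adjoint M) $$ (a*L+l, a'*L+l))"
    unfolding A_map_def ptrace_keep_def using a a' by (simp add: K_def L_def)
  also have "\<dots> = (\<Sum>l<L. \<Sum>t<K*N. (\<Sum>s<K*N. M$$(a*L+l,s) * (S$$(s div N, t div N) * \<rho>$$(s mod N, t mod N))) * cnj (M$$(a'*L+l,t)))"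
  proof (rule sum.cong[OF refl])
    fix l assume l: "l \<in> {..<L}"
    have p1: "a*L+l < K*L" "a'*L+l < K*L" using pl l a a' by auto
    show "(M * kron S \<rho> * mat_adjoint M) $$ (a*L+l, a'*L+l) =
      (\<Sum>t<K*N. (\<Sum>s<K*N. M$$(a*L+l,s) * (S$$(s div N, t div N) * \<rho>$$(s mod N, t mod N))) * cnj (M$$(a'*L+l,t)))"
    proof -
      have "(M * kron S \<rho> * mat_adjoint M) $$ (a*L+l, a'*L+l) = (\<Sum>t<K*N. (M * kron S \<rho>)$$(a*L+l,t) * mat_adjoint M $$ (t, a'*L+l))"
        by (rule mult_entry[OF MK adj p1])
      also have "\<dots> = (\<Sum>t<K*N. (\<Sum>s<K*N. M$$(a*L+l,s) * (S$$(s div N, t div N) * \<rho>$$(s mod N, t mod N))) * cnj (M$$(a'*L+l,t)))"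
      proof (rule sum.cong[OF refl])
        fix t assume t: "t \<in> {..<K*N}"
        have "(M * kron S \<rho>)$$(a*L+l,t) = (\<Sum>s<K*N. M$$(a*L+l,s) * kron S \<rho> $$ (s,t))"
          using t by (intro mult_entry[OF M Kr p1(1)]) auto
        also have "\<dots> = (\<Sum>s<K*N. M$$(a*L+l,s) * (S$$(s div N, t div N) * \<rho>$$(s mod N, t mod N)))"
          using t S r by (intro sum.cong refl) (auto simp: kron_index)
        finally show "(M * kron S \<rho>)$$(a*L+l,t) * mat_adjoint M $$ (t, a'*L+l) =
          (\<Sum>s<K*N. M$$(a*L+l,s) * (S$$(s div N, t div N) * \<rho>$$(s mod N, t mod N))) * cnj (M$$(a'*L+l,t))"
          using t p1 M by simp
      qed
      finally show ?thesis .
    qed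
  qed
  also have "\<dots> = (\<Sum>l<L. \<Sum>t<K*N. \<Sum>s<K*N.
     M$$(a*L+l,s) * (S$$(s div N, t div N) * \<rho>$$(s mod N, t mod N)) * cnj (M$$(a'*L+l,t)))"
    by (simp only: sum_distrib_right)
  finally show ?thesis .
qed

lemma D_entry:
  fixes M S P :: "complex mat" and k n m :: nat
  defines "K \<equiv> (2::nat)^k" and "N \<equiv> (2::nat)^n" and "L \<equiv> (2::nat)^(n+m)"
  assumes M: "M \<in> carrier_mat (K*L) (K*N)" and S: "S \<in> carrier_mat K K" and P: "P \<in> carrier_mat N N"
    and a: "a < K" and a': "a' < K"
  shows "(A_map k n m M S ((1 / 2^n) \<cdot>\<^sub>m 1\<^sub>m N) - A_map k n m M S ((1 / 2^n) \<cdot>\<^sub>m (1\<^sub>m N + P))) $$ (a,a')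
    = - (1 / 2^n) * (\<Sum>c<N. \<Sum>c'<N. P$$(c,c') * Bf S K L (\<lambda>l b. M$$(a*L+l, b*N+c)) (\<lambda>l b. M$$(a'*L+l, b*N+c')))"
proof -
  let ?r1 = "(1 / 2^n) \<cdot>\<^sub>m 1\<^sub>m N :: complex mat"
  let ?r2 = "(1 / 2^n) \<cdot>\<^sub>m (1\<^sub>m N + P) :: complex mat"
  have r1: "?r1 \<in> carrier_mat N N" by simp
  have r2: "?r2 \<in> carrier_mat N N" using P by simp
  have Np: "N > 0" unfolding N_def by simp
  have dA: "A_map k n m M S \<rho> \<in> carrier_mat K K" for \<rho>
    unfolding A_map_def ptrace_keep_def K_def by simp
  have "(A_map k n m M S ?r1 - A_map k n m M S ?r2) $$ (a,a') = A_map k n m M S ?r1 $$ (a,a') - A_map k n m M S ?r2 $$ (a,a')"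
    using dA[of ?r2] a a' by simp
  also have "\<dots> = (\<Sum>l<L. \<Sum>t<K*N. \<Sum>s<K*N.
     M$$(a*L+l,s) * (S$$(s div N, t div N) * ?r1$$(s mod N, t mod N)) * cnj (M$$(a'*L+l,t))
   - M$$(a*L+l,s) * (S$$(s div N, t div N) * ?r2$$(s mod N, t mod N)) * cnj (M$$(a'*L+l,t)))"
    unfolding A_entry[OF M[unfolded K_def N_def L_def] S[unfolded K_def] r1[unfolded N_def] a[unfolded K_def] a'[unfolded K_def], folded K_def N_def L_def]
      A_entry[OF M[unfolded K_def N_def L_def] S[unfolded K_def] r2[unfolded N_def] a[unfolded K_def] a'[unfolded K_def], folded K_def N_def L_def]
    by (simp only: sum_subtractf)
  also have "\<dots> = (\<Sum>l<L. \<Sum>t<K*N. \<Sum>s<K*N.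
     - (1 / 2^n) * (M$$(a*L+l,s) * (S$$(s div N, t div N) * P$$(s mod N, t mod N)) * cnj (M$$(a'*L+l,t))))"
  proof (intro sum.cong refl)
    fix l t s assume "s \<in> {..<K*N}" "t \<in> {..<K*N}"
    have sm: "s mod N < N" "t mod N < N" using Np by auto
    show "M$$(a*L+l,s) * (S$$(s div N, t div N) * ?r1$$(s mod N, t mod N)) * cnj (M$$(a'*L+l,t))
      - M$$(a*L+l,s) * (S$$(s div N, t div N) * ?r2$$(s mod N, t mod N)) * cnj (M$$(a'*L+l,t)) =
      - (1 / 2^n) * (M$$(a*L+l,s) * (S$$(s div N, t div N) * P$$(s mod N, t mod N)) * cnj (M$$(a'*L+l,t)))"
      using sm P by (simp add: algebra_simps)
  qed
  also have "\<dots> = - (1 / 2^n) * (\<Sum>l<L. \<Sum>t<K*N. \<Sum>s<K*N.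
     M$$(a*L+l,s) * (S$$(s div N, t div N) * P$$(s mod N, t mod N)) * cnj (M$$(a'*L+l,t)))"
    by (simp only: sum_distrib_left)
  also have "(\<Sum>l<L. \<Sum>t<K*N. \<Sum>s<K*N.
     M$$(a*L+l,s) * (S$$(s div N, t div N) * P$$(s mod N, t mod N)) * cnj (M$$(a'*L+l,t)))
    = (\<Sum>l<L. \<Sum>b'<K. \<Sum>c'<N. \<Sum>b<K. \<Sum>c<N.
     M$$(a*L+l,b*N+c) * (S$$(b, b') * P$$(c, c')) * cnj (M$$(a'*L+l,b'*N+c')))"
  proof (rule sum.cong[OF refl])
    fix l assume l: "l \<in> {..<L}"
    show "(\<Sum>t<K*N. \<Sum>s<K*N.
     M$$(a*L+l,s) * (S$$(s div N, t div N) * P$$(s mod N, t mod N)) * cnj (M$$(a'*L+l,t)))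
     = (\<Sum>b'<K. \<Sum>c'<N. \<Sum>b<K. \<Sum>c<N.
     M$$(a*L+l,b*N+c) * (S$$(b, b') * P$$(c, c')) * cnj (M$$(a'*L+l,b'*N+c')))"
      unfolding sum_split[of _ K N]
    proof (intro sum.cong refl)
      fix b' c' b c assume "c' \<in> {..<N}" "c \<in> {..<N}"
      then show "M$$(a*L+l,b*N+c) * (S$$((b*N+c) div N, (b'*N+c') div N) * P$$((b*N+c) mod N, (b'*N+c') mod N)) * cnj (M$$(a'*L+l,b'*N+c'))
        = M$$(a*L+l,b*N+c) * (S$$(b, b') * P$$(c, c')) * cnj (M$$(a'*L+l,b'*N+c'))"
        by simp
    qed
  qed
  also have "\<dots> = (\<Sum>c<N. \<Sum>c'<N. \<Sum>l<L. \<Sum>b'<K. \<Sum>b<K.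
     M$$(a*L+l,b*N+c) * (S$$(b, b') * P$$(c, c')) * cnj (M$$(a'*L+l,b'*N+c')))"
    by (rule sum5)
  also have "\<dots> = (\<Sum>c<N. \<Sum>c'<N. P$$(c,c') * Bf S K L (\<lambda>l b. M$$(a*L+l, b*N+c)) (\<lambda>l b. M$$(a'*L+l, b*N+c')))"
  proof (intro sum.cong refl)
    fix c c'
    have "(\<Sum>l<L. \<Sum>b'<K. \<Sum>b<K. M$$(a*L+l,b*N+c) * (S$$(b, b') * P$$(c, c')) * cnj (M$$(a'*L+l,b'*N+c')))
      = P$$(c,c') * (\<Sum>l<L. \<Sum>b'<K. \<Sum>b<K. M$$(a*L+l,b*N+c) * S$$(b, b') * cnj (M$$(a'*L+l,b'*N+c')))"
      by (simp add: sum_distrib_left mult_ac)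
    also have "(\<Sum>l<L. \<Sum>b'<K. \<Sum>b<K. M$$(a*L+l,b*N+c) * S$$(b, b') * cnj (M$$(a'*L+l,b'*N+c')))
       = Bf S K L (\<lambda>l b. M$$(a*L+l, b*N+c)) (\<lambda>l b. M$$(a'*L+l, b*N+c'))"
      unfolding Bf_def by (rule sum.cong[OF refl], rule sum.swap)
    finally show "(\<Sum>l<L. \<Sum>b'<K. \<Sum>b<K. M$$(a*L+l,b*N+c) * (S$$(b, b') * P$$(c, c')) * cnj (M$$(a'*L+l,b'*N+c')))
      = P$$(c,c') * Bf S K L (\<lambda>l b. M$$(a*L+l, b*N+c)) (\<lambda>l b. M$$(a'*L+l, b*N+c'))" .
  qed
  finally show ?thesis .
qed

lemma sum5b: "(\<Sum>x1\<in>A. \<Sum>x2\<in>B. \<Sum>x3\<in>C. \<Sum>x4\<in>D. \<Sum>x5\<in>E. f x5 x4 x3 x2 x1) =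
   (\<Sum>x4\<in>D. \<Sum>x2\<in>B. \<Sum>x5\<in>E. \<Sum>x3\<in>C. \<Sum>x1\<in>A. f x5 x4 x3 x2 x1)"
  apply (simp only: sum.swap[where A=A and B=B])
  apply (simp only: sum.swap[where A=A and B=C])
  apply (simp only: sum.swap[where A=A and B=D])
  apply (simp only: sum.swap[where A=A and B=E])
  apply (simp only: sum.swap[where A=C and B=D])
  apply (simp only: sum.swap[where A=B and B=D])
  apply (simp only: sum.swap[where A=C and B=E])
  done

lemma T_entry:
  fixes M S :: "complex mat" and k n m :: nat
  defines "K \<equiv> (2::nat)^k" and "N \<equiv> (2::nat)^n" and "L \<equiv> (2::nat)^(n+m)"
  assumes M: "M \<in> carrier_mat (K*L) (K*N)" and S: "S \<in> carrier_mat K K"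
  shows "mat_trace (mat_adjoint M * M * kron S (1\<^sub>m N)) =
     (\<Sum>a<K. \<Sum>c<N. Bf S K L (\<lambda>l b. M$$(a*L+l, b*N+c)) (\<lambda>l b. M$$(a*L+l, b*N+c)))"
proof -
  have Np: "N > 0" unfolding N_def by simp
  have adj: "mat_adjoint M \<in> carrier_mat (K*N) (K*L)" using M by (intro carrier_matI) auto
  have MM: "mat_adjoint M * M \<in> carrier_mat (K*N) (K*N)" using adj M by auto
  have Kr: "kron S (1\<^sub>m N) \<in> carrier_mat (K*N) (K*N)" using S by (intro carrier_matI) auto
  have "mat_trace (mat_adjoint M * M * kron S (1\<^sub>m N)) =
     (\<Sum>s<K*N. \<Sum>t<K*N. (\<Sum>p<K*L. cnj (M$$(p,s)) * M$$(p,t)) * (S$$(t div N, s div N) * 1\<^sub>m N $$ (t mod N, s mod N)))"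
    unfolding mat_trace_def
  proof (rule sum.cong)
    show "{..<dim_row (mat_adjoint M * M * kron S (1\<^sub>m N))} = {..<K*N}" using M by simp
    fix s assume s: "s \<in> {..<K*N}"
    have "(mat_adjoint M * M * kron S (1\<^sub>m N)) $$ (s,s) = (\<Sum>t<K*N. (mat_adjoint M * M)$$(s,t) * kron S (1\<^sub>m N) $$ (t,s))"
      using s by (intro mult_entry[OF MM Kr]) auto
    also have "\<dots> = (\<Sum>t<K*N. (\<Sum>p<K*L. cnj (M$$(p,s)) * M$$(p,t)) * (S$$(t div N, s div N) * 1\<^sub>m N $$ (t mod N, s mod N)))"
    proof (rule sum.cong[OF refl])
      fix t assume t: "t \<in> {..<K*N}"
      have "(mat_adjoint M * M)$$(s,t) = (\<Sum>p<K*L. mat_adjoint M $$ (s,p) * M$$(p,t))"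
        using s t by (intro mult_entry[OF adj M]) auto
      also have "\<dots> = (\<Sum>p<K*L. cnj (M$$(p,s)) * M$$(p,t))"
        using s M by (intro sum.cong refl) auto
      finally show "(mat_adjoint M * M)$$(s,t) * kron S (1\<^sub>m N) $$ (t,s) =
         (\<Sum>p<K*L. cnj (M$$(p,s)) * M$$(p,t)) * (S$$(t div N, s div N) * 1\<^sub>m N $$ (t mod N, s mod N))"
        using s t S by (simp add: kron_index)
    qed
    finally show "(mat_adjoint M * M * kron S (1\<^sub>m N)) $$ (s,s) =
      (\<Sum>t<K*N. (\<Sum>p<K*L. cnj (M$$(p,s)) * M$$(p,t)) * (S$$(t div N, s div N) * 1\<^sub>m N $$ (t mod N, s mod N)))" .
  qed
  also have "\<dots> = (\<Sum>b'<K. \<Sum>c<N. \<Sum>b<K. \<Sum>c''<N. (\<Sum>p<K*L. cnj (M$$(p,b'*N+c)) * M$$(p,b*N+c'')) * (S$$(b, b') * (if c'' = c then 1 else 0)))"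
    unfolding sum_split[of _ K N]
    by (intro sum.cong refl) auto
  also have "\<dots> = (\<Sum>b'<K. \<Sum>c<N. \<Sum>b<K. (\<Sum>p<K*L. cnj (M$$(p,b'*N+c)) * M$$(p,b*N+c)) * S$$(b, b'))"
  proof (intro sum.cong refl)
    fix b' c b assume c: "c \<in> {..<N}"
    have "(\<Sum>c''<N. (\<Sum>p<K*L. cnj (M$$(p,b'*N+c)) * M$$(p,b*N+c'')) * (S$$(b, b') * (if c'' = c then 1 else 0)))
      = (\<Sum>c''<N. if c'' = c then (\<Sum>p<K*L. cnj (M$$(p,b'*N+c)) * M$$(p,b*N+c'')) * S$$(b, b') else 0)"
      by (intro sum.cong refl) auto
    also have "\<dots> = (\<Sum>p<K*L. cnj (M$$(p,b'*N+c)) * M$$(p,b*N+c)) * S$$(b, b')"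
      using c by (simp add: sum.delta)
    finally show "(\<Sum>c''<N. (\<Sum>p<K*L. cnj (M$$(p,b'*N+c)) * M$$(p,b*N+c'')) * (S$$(b, b') * (if c'' = c then 1 else 0)))
      = (\<Sum>p<K*L. cnj (M$$(p,b'*N+c)) * M$$(p,b*N+c)) * S$$(b, b')" .
  qed
  also have "\<dots> = (\<Sum>b'<K. \<Sum>c<N. \<Sum>b<K. \<Sum>a<K. \<Sum>l<L. M$$(a*L+l,b*N+c) * S$$(b, b') * cnj (M$$(a*L+l,b'*N+c)))"
    unfolding sum_split[of _ K L] sum_distrib_right by (intro sum.cong refl) (simp add: mult_ac)
  also have "\<dots> = (\<Sum>a<K. \<Sum>c<N. \<Sum>l<L. \<Sum>b<K. \<Sum>b'<K. M$$(a*L+l,b*N+c) * S$$(b, b') * cnj (M$$(a*L+l,b'*N+c)))"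
    by (rule sum5b)
  also have "\<dots> = (\<Sum>a<K. \<Sum>c<N. Bf S K L (\<lambda>l b. M$$(a*L+l, b*N+c)) (\<lambda>l b. M$$(a*L+l, b*N+c)))"
    unfolding Bf_def by simp
  finally show ?thesis .
qed

lemma nonid_sub: "nonid_paulis n \<subseteq> allP n" unfolding nonid_paulis_def allP_def by auto

lemma nonid_card: "card (nonid_paulis n) = 4^n - 1"
proof -
  have "nonid_paulis n = allP n - {replicate n PI}" unfolding nonid_paulis_def allP_def by auto
  moreover have "replicate n PI \<in> allP n" unfolding allP_def by simp
  ultimately show ?thesis using allP_finite[of n] allP_card[of n] by (simp add: card_Diff_singleton)
qed

lemma sq_bound:
  fixes g :: "nat \<Rightarrow> nat \<Rightarrow> nat \<Rightarrow> nat \<Rightarrow> real" and R :: "nat \<Rightarrow> nat \<Rightarrow> real"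
  assumes "\<And>a a' c c'. a < K \<Longrightarrow> a' < K \<Longrightarrow> c < N \<Longrightarrow> c' < N \<Longrightarrow> g a a' c c' \<le> R a c * R a' c'"
  shows "(\<Sum>a<K. \<Sum>a'<K. \<Sum>c<N. \<Sum>c'<N. g a a' c c') \<le> (\<Sum>a<K. \<Sum>c<N. R a c)^2"
proof -
  have "(\<Sum>a<K. \<Sum>a'<K. \<Sum>c<N. \<Sum>c'<N. g a a' c c') \<le> (\<Sum>a<K. \<Sum>a'<K. \<Sum>c<N. \<Sum>c'<N. R a c * R a' c')"
    using assms by (intro sum_mono) auto
  also have "\<dots> = (\<Sum>a<K. \<Sum>c<N. \<Sum>a'<K. \<Sum>c'<N. R a c * R a' c')"
    by (rule sum.cong[OF refl], rule sum.swap)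
  also have "\<dots> = (\<Sum>a<K. \<Sum>c<N. R a c * (\<Sum>a'<K. \<Sum>c'<N. R a' c'))"
    by (simp add: sum_distrib_left)
  also have "\<dots> = (\<Sum>a<K. \<Sum>c<N. R a c) * (\<Sum>a'<K. \<Sum>c'<N. R a' c')"
    by (simp add: sum_distrib_right)
  finally show ?thesis by (simp add: power2_eq_square)
qed

theorem mainTheorem11:
  fixes k n m :: nat and M \<Sigma> :: "complex mat"
  assumes "n \<ge> 1"
    and "M \<in> carrier_mat (2^(k+n+m)) (2^(k+n))"
    and "psd_mat (1\<^sub>m (2^(k+n)) - mat_adjoint M * M)"
    and "\<Sigma> \<in> carrier_mat (2^k) (2^k)"
    and "psd_mat \<Sigma>"
  shows "(\<Sum>P\<in>nonid_paulis n.
            (trace_norm (A_map k n m M \<Sigma> ((1 / 2^n) \<cdot>\<^sub>m 1\<^sub>m (2^n))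
                       - A_map k n m M \<Sigma> ((1 / 2^n) \<cdot>\<^sub>m (1\<^sub>m (2^n) + pauli_obs P))))^2)
          / real (card (nonid_paulis n))
       \<le> (2^k / 2^n) * (1 / (2^(2*n) - 1))
          * (Re (mat_trace (mat_adjoint M * M * kron \<Sigma> (1\<^sub>m (2^n)))))^2"
proof -
  let ?K = "2^k :: nat" and ?N = "2^n :: nat" and ?L = "2^(n+m) :: nat"
  have M: "M \<in> carrier_mat (?K * ?L) (?K * ?N)" using assms(2) by (simp add: power_add mult_ac)
  have S: "\<Sigma> \<in> carrier_mat ?K ?K" by fact
  define u where "u = (\<lambda>a c. (\<lambda>l b. M$$(a*?L+l, b*?N+c)))"
  define g where "g = (\<lambda>a a' c c'. Bf \<Sigma> ?K ?L (u a c) (u a' c'))"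
  define h where "h = (\<lambda>ps a a'. (\<Sum>c<?N. \<Sum>c'<?N. pauli_obs ps $$ (c,c') * g a a' c c'))"
  define X where "X = (\<lambda>ps. A_map k n m M \<Sigma> ((1 / 2^n) \<cdot>\<^sub>m 1\<^sub>m (2^n))
                       - A_map k n m M \<Sigma> ((1 / 2^n) \<cdot>\<^sub>m (1\<^sub>m (2^n) + pauli_obs ps)))"
  define Q where "Q = (\<Sum>a<?K. \<Sum>a'<?K. \<Sum>c<?N. \<Sum>c'<?N. (cmod (g a a' c c'))^2)"
  define T where "T = Re (mat_trace (mat_adjoint M * M * kron \<Sigma> (1\<^sub>m (2^n))))"
  have Pc: "ps \<in> allP n \<Longrightarrow> pauli_obs ps \<in> carrier_mat ?N ?N" for ps
    using pauli_obs_dim[of ps] unfolding allP_def by simp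
  have Xc: "X ps \<in> carrier_mat ?K ?K" for ps
    unfolding X_def A_map_def ptrace_keep_def by (intro carrier_matI) auto
  have Xe: "ps \<in> allP n \<Longrightarrow> a < ?K \<Longrightarrow> a' < ?K \<Longrightarrow> X ps $$ (a,a') = - (1 / 2^n) * h ps a a'" for ps a a'
    unfolding X_def h_def g_def u_def by (rule D_entry[OF M S Pc])
  have tnb: "(trace_norm (X ps))^2 \<le> real ?K * ((1/2^n)^2 * (\<Sum>a<?K. \<Sum>a'<?K. (cmod (h ps a a'))^2))"
    if ps: "ps \<in> allP n" for ps
  proof -
    have "(\<Sum>a<?K. \<Sum>a'<?K. (cmod (X ps $$ (a,a')))^2) = (\<Sum>a<?K. \<Sum>a'<?K. (1/2^n)^2 * (cmod (h ps a a'))^2)"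
      using Xe[OF ps] by (intro sum.cong refl) (simp add: norm_mult norm_divide norm_power power_divide power_mult_distrib)
    also have "\<dots> = (1/2^n)^2 * (\<Sum>a<?K. \<Sum>a'<?K. (cmod (h ps a a'))^2)" by (simp add: sum_distrib_left)
    finally show ?thesis using tn_bound[OF Xc[of ps]] by simp
  qed
  have "(\<Sum>P\<in>nonid_paulis n. (trace_norm (X P))^2) \<le> (\<Sum>P\<in>allP n. (trace_norm (X P))^2)"
    by (rule sum_mono2[OF allP_finite nonid_sub]) auto
  also have "\<dots> \<le> (\<Sum>P\<in>allP n. real ?K * ((1/2^n)^2 * (\<Sum>a<?K. \<Sum>a'<?K. (cmod (h P a a'))^2)))"
    by (intro sum_mono tnb)
  also have "\<dots> = real ?K * (1/2^n)^2 * (\<Sum>a<?K. \<Sum>a'<?K. \<Sum>P\<in>allP n. (cmod (h P a a'))^2)"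
  proof -
    have "(\<Sum>P\<in>allP n. \<Sum>a<?K. \<Sum>a'<?K. (cmod (h P a a'))^2) = (\<Sum>a<?K. \<Sum>a'<?K. \<Sum>P\<in>allP n. (cmod (h P a a'))^2)"
      by (simp only: sum.swap[where A="allP n"])
    then show ?thesis by (simp add: sum_distrib_left[symmetric] mult.assoc)
  qed
  also have "(\<Sum>a<?K. \<Sum>a'<?K. \<Sum>P\<in>allP n. (cmod (h P a a'))^2) = 2^n * Q"
  proof -
    have "(\<Sum>a<?K. \<Sum>a'<?K. \<Sum>P\<in>allP n. (cmod (h P a a'))^2) = (\<Sum>a<?K. \<Sum>a'<?K. 2^n * (\<Sum>c<?N. \<Sum>c'<?N. (cmod (g a a' c c'))^2))"
      unfolding h_def by (intro sum.cong refl pauli_twirl)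
    then show ?thesis unfolding Q_def by (simp add: sum_distrib_left)
  qed
  also have "Q \<le> T^2"
  proof -
    have "Q \<le> (\<Sum>a<?K. \<Sum>c<?N. Re (Bf \<Sigma> ?K ?L (u a c) (u a c)))^2"
      unfolding Q_def g_def by (rule sq_bound) (rule Bcs[OF assms(5) S])
    also have "(\<Sum>a<?K. \<Sum>c<?N. Re (Bf \<Sigma> ?K ?L (u a c) (u a c))) = T"
      unfolding T_def T_entry[OF M S] u_def by (simp add: Re_sum)
    finally show ?thesis .
  qed
  finally have main: "(\<Sum>P\<in>nonid_paulis n. (trace_norm (X P))^2) \<le> real ?K * (1/2^n)^2 * (2^n * T^2)"
    by (simp add: mult_left_mono)
  have cd: "real (card (nonid_paulis n)) = 2^(2*n) - 1"
  proof -
    have "(1::nat) \<le> 4^n" by simp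
    then show ?thesis unfolding nonid_card by (simp add: of_nat_diff power_mult)
  qed
  have cpos: "(2::real)^(2*n) - 1 > 0" using assms(1) by (simp add: power_mult)
  have "real ?K * (1/2^n)^2 * (2^n * T^2) = (2^k / 2^n) * T^2"
    by (simp add: power2_eq_square field_simps)
  then have "(\<Sum>P\<in>nonid_paulis n. (trace_norm (X P))^2) \<le> (2^k / 2^n) * T^2" using main by simp
  then have "(\<Sum>P\<in>nonid_paulis n. (trace_norm (X P))^2) / real (card (nonid_paulis n)) \<le> (2^k / 2^n) * T^2 / (2^(2*n) - 1)"
    unfolding cd using cpos by (intro divide_right_mono) auto
  then show ?thesis unfolding X_def T_def by simp
qed

end
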